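(* Fix $i$ with $0\le i\le\rho(m)-1$. Define the sequence $(v^{\alpha_i}(n))_{n\ge0}$ by $v^{\alpha_i}(j)=x^{\alpha_i}(j+1)$ for $0\le j\le k-2$, $v^{\alpha_i}(k-1)=1-x^{\alpha_i}(k)$, and $v^{\alpha_i}(n)=\mathbf 1\big[\sum_{j=1}^k\bar a_j v^{\alpha_i}(n-j)-\bar\theta\big]$ for $n\ge k$. Then for every $t\ge k$: (a) $v^{\alpha_i}(t)=0$; (b) $\sum_{j=1}^k\bar a_j v^{\alpha_i}(t-j)\le\bar\theta-2$; and (c) the sequence $v^{\alpha_i}$ has transient length $k-p_i$ and cycle length $1$ (it is eventually the constant sequence $0$).
   Context: For $u\in\mathbb{R}$ let $\mathbf 1[u]=1$ if $u\ge 0$ and $\mathbf 1[u]=0$ if $u<0$. For a $\{0,1\}$-valued sequence $(s(n))_{n\ge0}$ that is eventually periodic, its transient length is the least $T\ge0$ such that there is $P\ge1$ with $s(n+P)=s(n)$ for all $n\ge T$, and its cycle length is the least such $P$ (for that $T$). Let $m$ be a positive integer and let $\rho(m)$ denote the number of primes $p$ with $2m<p<3m$; assume $\rho(m)\ge 2$. List these primes as $p_0>p_1>\dots>p_{\rho(m)-1}$ and put $\alpha_i=3m-p_i$. Let $k=(6m-1)\rho(m)$, $\mu_i=\lfloor k/p_i\rfloor$, $\beta_i=k-p_i\mu_i$. Define weights $\bar a_j$, $1\le j\le k$: if $\rho(m)$ is even, $\bar a_j=2$ if $j=\ell p_i$ for some $i$ and some $\ell$ with $1\le \ell\le 3\rho(m)/2$,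 $\bar a_j=-2$ if $j=\ell p_i$ with $3\rho(m)/2<\ell\le 2\rho(m)$, and $\bar a_j=0$ otherwise; if $\rho(m)$ is odd, $\bar a_j=2$ if $j=\ell p_i$ with $1\le\ell\le (3\rho(m)-1)/2$, $\bar a_j=-2$ if $j=\ell p_i$ with $(3\rho(m)+1)/2\le \ell\le 2\rho(m)-2$, $\bar a_j=-1$ if $j=\ell p_i$ with $\ell\in\{2\rho(m)-1,2\rho(m)\}$, and $\bar a_j=0$ otherwise (well defined since the sets $\{\ell p_i:1\le\ell\le2\rho(m)\}$ are pairwise disjoint). Let $\bar\theta=2\rho(m)$. For each $i$ define $x^{\alpha_i}(t)$ for $0\le t\le k-1$ by $x^{\alpha_i}(t)=1$ if $t=\beta_i+\ell p_i$ for some $0\le \ell\le\mu_i-1$ and $x^{\alpha_i}(t)=0$ otherwise, and for $t\ge k$ by $x^{\alpha_i}(t)=\mathbf 1\big[\sum_{j=1}^k \bar a_j x^{\alpha_i}(t-j)-\bar\theta\big]$. *)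

theory Defs
  imports "HOL-Computational_Algebra.Primes"
begin

definition step1 :: "int \<Rightarrow> int" where
  "step1 u = (if u \<ge> 0 then 1 else 0)"

function thr_seq :: "nat \<Rightarrow> (nat \<Rightarrow> int) \<Rightarrow> int \<Rightarrow> (nat \<Rightarrow> int) \<Rightarrow> nat \<Rightarrow> int" where
  "thr_seq k a \<theta> init t =
     (if t < k then init t
      else step1 ((\<Sum>j\<in>{1..k}. a j * thr_seq k a \<theta> init (t - j)) - \<theta>))"
  by pat_completeness auto
termination
  by (relation "measure (\<lambda>(k, a, \<theta>, init, t). t)") auto

definition prime_set :: "nat \<Rightarrow> nat set" where
  "prime_set m = {p. prime p \<and> 2 * m < p \<and> p < 3 * m}"

definition rho :: "nat \<Rightarrow> nat" where
  "rho m = card (prime_set m)"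

definition pr :: "nat \<Rightarrow> nat \<Rightarrow> nat" where
  "pr m i = rev (sorted_list_of_set (prime_set m)) ! i"

definition alpha :: "nat \<Rightarrow> nat \<Rightarrow> nat" where
  "alpha m i = 3 * m - pr m i"

definition kk :: "nat \<Rightarrow> nat" where
  "kk m = (6 * m - 1) * rho m"

definition mu :: "nat \<Rightarrow> nat \<Rightarrow> nat" where
  "mu m i = kk m div pr m i"

definition beta :: "nat \<Rightarrow> nat \<Rightarrow> nat" where
  "beta m i = kk m - pr m i * mu m i"

text \<open>Weight attached to multiple index l (1 <= l <= 2 rho).\<close>
definition wl :: "nat \<Rightarrow> nat \<Rightarrow> int" where
  "wl m l =
     (if even (rho m) then
        (if 2 * l \<le> 3 * rho m then 2 else -2)
      else
        (if 2 * l \<le> 3 * rho m - 1 then 2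
         else if l \<le> 2 * rho m - 2 then -2
         else -1))"

definition abar :: "nat \<Rightarrow> nat \<Rightarrow> int" where
  "abar m j =
     (if \<exists>i l. i < rho m \<and> 1 \<le> l \<and> l \<le> 2 * rho m \<and> j = l * pr m i
      then wl m (THE l. \<exists>i. i < rho m \<and> 1 \<le> l \<and> l \<le> 2 * rho m \<and> j = l * pr m i)
      else 0)"

definition theta_bar :: "nat \<Rightarrow> int" where
  "theta_bar m = 2 * int (rho m)"

definition x_init :: "nat \<Rightarrow> nat \<Rightarrow> nat \<Rightarrow> int" where
  "x_init m i t = (if \<exists>l. l < mu m i \<and> t = beta m i + l * pr m i then 1 else 0)"

definition xseq :: "nat \<Rightarrow> nat \<Rightarrow> nat \<Rightarrow> int" where
  "xseq m i = thr_seq (kk m) (abar m) (theta_bar m) (x_init m i)"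

definition v_init :: "nat \<Rightarrow> nat \<Rightarrow> nat \<Rightarrow> int" where
  "v_init m i j = (if j + 2 \<le> kk m then xseq m i (j + 1) else 1 - xseq m i (kk m))"

definition vseq :: "nat \<Rightarrow> nat \<Rightarrow> nat \<Rightarrow> int" where
  "vseq m i = thr_seq (kk m) (abar m) (theta_bar m) (v_init m i)"

definition periodic_from :: "(nat \<Rightarrow> 'a) \<Rightarrow> nat \<Rightarrow> nat \<Rightarrow> bool" where
  "periodic_from s T P \<longleftrightarrow> P \<ge> 1 \<and> (\<forall>n\<ge>T. s (n + P) = s n)"

definition eventually_periodic :: "(nat \<Rightarrow> 'a) \<Rightarrow> bool" where
  "eventually_periodic s \<longleftrightarrow> (\<exists>T P. periodic_from s T P)"

definition transient_length :: "(nat \<Rightarrow> 'a) \<Rightarrow> nat" where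
  "transient_length s = (LEAST T. \<exists>P. periodic_from s T P)"

definition cycle_length :: "(nat \<Rightarrow> 'a) \<Rightarrow> nat" where
  "cycle_length s = (LEAST P. periodic_from s (transient_length s) P)"

end

theory Submission
  imports Defs
begin


lemma prime_set_finite: "finite (prime_set m)"
  unfolding prime_set_def by (rule finite_subset[of _ "{..<3*m}"]) auto

lemma rho_le: "rho m \<le> m - 1"
proof -
  have "prime_set m \<subseteq> {2*m<..<3*m}" unfolding prime_set_def by auto
  hence "rho m \<le> card {2*m<..<3*m}" unfolding rho_def by (intro card_mono) auto
  thus ?thesis by simp
qed

lemma pr_in: "i < rho m \<Longrightarrow> pr m i \<in> prime_set m"
  unfolding pr_def rho_def
  using prime_set_finite[of m]
  by (metis length_rev length_sorted_list_of_set nth_mem set_rev set_sorted_list_of_set)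

lemma pr_inj: "i < rho m \<Longrightarrow> i' < rho m \<Longrightarrow> pr m i = pr m i' \<Longrightarrow> i = i'"
  unfolding pr_def rho_def using prime_set_finite[of m]
  by (metis distinct_rev distinct_sorted_list_of_set length_rev length_sorted_list_of_set nth_eq_iff_index_eq)

lemma pr_props: assumes "i < rho m" shows "prime (pr m i)" "2*m < pr m i" "pr m i < 3*m"
  using pr_in[OF assms] unfolding prime_set_def by auto

lemma two_rho_lt: assumes "i < rho m" shows "2 * rho m < pr m i"
proof -
  have "m > 0" using rho_le[of m] assms by auto
  thus ?thesis using rho_le[of m] pr_props(2)[OF assms] by linarith
qed

lemma pr_dvd_unique:
  assumes "i < rho m" "i' < rho m" "1 \<le> l'" "l' \<le> 2 * rho m" "pr m i dvd l' * pr m i'"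
  shows "i = i'"
proof -
  have p: "prime (pr m i)" "prime (pr m i')" using pr_props assms by auto
  have "\<not> pr m i dvd l'" using two_rho_lt[OF assms(1)] assms(3,4) by (auto dest: dvd_imp_le)
  hence "pr m i dvd pr m i'" using assms(5) p(1) prime_dvd_mult_iff by blast
  hence "pr m i = pr m i'" using p primes_dvd_imp_eq by blast
  thus ?thesis using pr_inj assms by blast
qed

lemma abar_at:
  assumes "i < rho m" "1 \<le> l" "l \<le> 2 * rho m"
  shows "abar m (l * pr m i) = wl m l"
proof -
  have "(THE l'. \<exists>i'. i' < rho m \<and> 1 \<le> l' \<and> l' \<le> 2 * rho m \<and> l * pr m i = l' * pr m i') = l"
  proof (rule the_equality)
    show "\<exists>i'. i' < rho m \<and> 1 \<le> l \<and> l \<le> 2 * rho m \<and> l * pr m i = l * pr m i'" using assms by auto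
  next
    fix l' assume "\<exists>i'. i' < rho m \<and> 1 \<le> l' \<and> l' \<le> 2 * rho m \<and> l * pr m i = l' * pr m i'"
    then obtain i' where h: "i' < rho m" "1 \<le> l'" "l' \<le> 2 * rho m" "l * pr m i = l' * pr m i'" by blast
    have "pr m i dvd l' * pr m i'" using h(4) by (metis dvd_triv_right)
    hence "i = i'" using pr_dvd_unique assms h by blast
    moreover have "pr m i > 0" using pr_props(2)[OF assms(1)] by simp
    ultimately show "l' = l" using h(4) by simp
  qed
  moreover have "\<exists>i' l'. i' < rho m \<and> 1 \<le> l' \<and> l' \<le> 2 * rho m \<and> l * pr m i = l' * pr m i'"
    using assms by blast
  ultimately show ?thesis unfolding abar_def by simp
qed

lemma abar_nz: "abar m j \<noteq> 0 \<Longrightarrow> \<exists>i l. i < rho m \<and> 1 \<le> l \<and> l \<le> 2 * rho m \<and> j = l * pr m i"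
  unfolding abar_def by (auto split: if_splits)

lemma wl_le: "wl m l \<le> 2" unfolding wl_def by auto

lemma abar_le: "abar m j \<le> 2" unfolding abar_def using wl_le by auto

lemma supp_mult:
  assumes "i < rho m" "abar m j \<noteq> 0" "pr m i dvd j"
  shows "\<exists>l. 1 \<le> l \<and> l \<le> 2 * rho m \<and> j = l * pr m i"
proof -
  obtain i' l where h: "i' < rho m" "1 \<le> l" "l \<le> 2 * rho m" "j = l * pr m i'"
    using abar_nz[OF assms(2)] by blast
  have "i = i'" using pr_dvd_unique[OF assms(1) h(1-3)] assms(3) h(4) by simp
  thus ?thesis using h by blast
qed



definition hh :: "nat \<Rightarrow> nat" where "hh m = (if even (rho m) then 3 * rho m div 2 else (3 * rho m - 1) div 2)"
definition ee :: "nat \<Rightarrow> nat" where "ee m = (if even (rho m) then 2 * rho m else 2 * rho m - 2)"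

lemma wl_pos: assumes "l \<le> hh m" shows "wl m l = 2"
proof (cases "even (rho m)")
  case True
  then obtain b where b: "rho m = 2*b" by blast
  have "2*l \<le> 3*rho m" using assms True unfolding hh_def b by simp
  then show ?thesis using True unfolding wl_def by simp
next
  case False
  then obtain b where b: "rho m = 2*b+1" using oddE by blast
  have "2*l \<le> 3*rho m - 1" using assms False unfolding hh_def b by simp
  then show ?thesis using False unfolding wl_def by simp
qed

lemma wl_neg: "hh m < l \<Longrightarrow> wl m l \<le> 0"
  unfolding wl_def hh_def by (auto split: if_splits elim!: evenE oddE)

lemma wl_mid: "hh m < l \<Longrightarrow> l \<le> ee m \<Longrightarrow> wl m l = -2"
  unfolding wl_def hh_def ee_def by (auto split: if_splits elim!: evenE oddE)

lemma wl_end: "odd (rho m) \<Longrightarrow> rho m \<ge> 2 \<Longrightarrow> l = 2*rho m - 1 \<or> l = 2*rho m \<Longrightarrow> wl m l = -1"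
  unfolding wl_def by (auto split: if_splits elim!: evenE oddE)

lemma P_low: "n \<le> hh m \<Longrightarrow> (\<Sum>l\<in>{1..n}. wl m l) = 2 * int n"
  by (induction n) (auto simp: wl_pos)

lemma P_mid: "hh m + d \<le> ee m \<Longrightarrow> (\<Sum>l\<in>{1..hh m + d}. wl m l) = 2 * int (hh m) - 2 * int d"
proof (induction d)
  case 0
  then show ?case using P_low[of "hh m" m] by simp
next
  case (Suc d)
  have "(\<Sum>l\<in>{1..hh m + Suc d}. wl m l) = (\<Sum>l\<in>{1..hh m + d}. wl m l) + wl m (hh m + Suc d)"
    by simp
  also have "wl m (hh m + Suc d) = -2" using Suc.prems by (intro wl_mid) auto
  finally show ?case using Suc by simp
qed

lemma hh_le: "rho m \<ge> 2 \<Longrightarrow> hh m \<le> ee m"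
  unfolding hh_def ee_def by (auto elim!: evenE oddE)

lemma P_total: assumes "rho m \<ge> 2" shows "(\<Sum>l\<in>{1..2*rho m}. wl m l) = 2 * int (rho m)"
proof (cases "even (rho m)")
  case True
  have e: "ee m = 2 * rho m" using True by (simp add: ee_def)
  have "(\<Sum>l\<in>{1..2*rho m}. wl m l) = (\<Sum>l\<in>{1..hh m + (ee m - hh m)}. wl m l)"
    using hh_le[OF assms] e by simp
  also have "\<dots> = 2 * int (hh m) - 2 * int (ee m - hh m)"
    using hh_le[OF assms] by (intro P_mid) simp
  finally show ?thesis using True e hh_le[OF assms] unfolding hh_def by (auto elim!: evenE)
next
  case False
  have e: "ee m = 2 * rho m - 2" using False by (simp add: ee_def)
  have ee2: "2*rho m = Suc (Suc (ee m))" using e assms by simp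
  have "(\<Sum>l\<in>{1..2*rho m}. wl m l) = (\<Sum>l\<in>{1..Suc (Suc (ee m))}. wl m l)"
    by (simp only: ee2)
  also have "\<dots> = (\<Sum>l\<in>{1..ee m}. wl m l) + wl m (ee m + 1) + wl m (ee m + 2)" by simp
  also have "wl m (ee m + 1) = -1" using False assms e by (intro wl_end) auto
  also have "wl m (ee m + 2) = -1" using False assms e by (intro wl_end) auto
  also have "(\<Sum>l\<in>{1..ee m}. wl m l) = (\<Sum>l\<in>{1..hh m + (ee m - hh m)}. wl m l)"
    using hh_le[OF assms] by simp
  also have "\<dots> = 2 * int (hh m) - 2 * int (ee m - hh m)"
    using hh_le[OF assms] by (intro P_mid) simp
  finally show ?thesis using False e hh_le[OF assms] assms unfolding hh_def by (auto elim!: oddE)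
qed

lemma tail_bound: assumes "rho m \<ge> 2" "1 \<le> q"
  shows "(\<Sum>l\<in>{q+1..2*rho m}. wl m l) \<le> 2 * int (rho m) - 2"
proof (cases "q \<le> 2 * rho m")
  case False
  then show ?thesis using assms by simp
next
  case True
  have split: "(\<Sum>l\<in>{1..2*rho m}. wl m l) = (\<Sum>l\<in>{1..q}. wl m l) + (\<Sum>l\<in>{q+1..2*rho m}. wl m l)"
    using sum.ub_add_nat[of 1 q "wl m" "2*rho m - q"] True assms by simp
  show ?thesis
  proof (cases "q \<le> hh m")
    case True
    then show ?thesis using split P_total[OF assms(1)] P_low[OF True] assms by simp
  next
    case False
    have "(\<Sum>l\<in>{q+1..2*rho m}. wl m l) \<le> (\<Sum>l\<in>{q+1..2*rho m}. 0)"
      using False by (intro sum_mono wl_neg) auto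
    then show ?thesis using assms by simp
  qed
qed



context
  fixes m i :: nat
  assumes m0: "m > 0" and r2: "rho m \<ge> 2" and il: "i < rho m"
begin

lemma p_pos: "pr m i > 0" using pr_props(2)[OF il] by simp

lemma k_big: "2 * rho m * pr m i \<le> kk m"
proof -
  have "2 * pr m i \<le> 6*m - 1" using pr_props(3)[OF il] by linarith
  hence "rho m * (2 * pr m i) \<le> rho m * (6*m - 1)" by (rule mult_left_mono) simp
  thus ?thesis unfolding kk_def by (simp add: ac_simps)
qed

lemma k_gt_p: "pr m i < kk m"
proof -
  have "4 * pr m i \<le> 2 * rho m * pr m i" using r2 by simp
  thus ?thesis using k_big p_pos by linarith
qed

lemma beta_eq: "beta m i = kk m mod pr m i"
  unfolding beta_def mu_def by (simp add: minus_mult_div_eq_mod)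

lemma mu_ge: "2 * rho m \<le> mu m i"
  unfolding mu_def using k_big p_pos by (simp add: less_eq_div_iff_mult_less_eq)

lemma x_init_char:
  assumes "n < kk m"
  shows "x_init m i n = (if n mod pr m i = kk m mod pr m i then 1 else 0)"
proof -
  let ?p = "pr m i"
  have "(\<exists>l. l < mu m i \<and> n = beta m i + l * ?p) \<longleftrightarrow> n mod ?p = kk m mod ?p"
  proof
    assume "\<exists>l. l < mu m i \<and> n = beta m i + l * ?p"
    then obtain l where "n = beta m i + l * ?p" by blast
    thus "n mod ?p = kk m mod ?p" unfolding beta_eq by simp
  next
    assume h: "n mod ?p = kk m mod ?p"
    have n: "n = beta m i + (n div ?p) * ?p" unfolding beta_eq h[symmetric] by (simp add: mod_div_mult_eq)
    have k: "kk m = beta m i + mu m i * ?p" unfolding beta_eq mu_def by (simp add: mod_div_mult_eq)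
    have "(n div ?p) * ?p < mu m i * ?p" using assms n k by linarith
    hence "n div ?p < mu m i" by simp
    thus "\<exists>l. l < mu m i \<and> n = beta m i + l * ?p" using n by blast
  qed
  thus ?thesis unfolding x_init_def by simp
qed

lemma xseq_lt: "n < kk m \<Longrightarrow> xseq m i n = x_init m i n"
  unfolding xseq_def by (subst thr_seq.simps) simp

lemma vseq_lt: "n < kk m \<Longrightarrow> vseq m i n = v_init m i n"
  unfolding vseq_def by (subst thr_seq.simps) simp

lemma sum_mults:
  "(\<Sum>j\<in>(\<lambda>l. l * pr m i) ` {a..b}. abar m j) = (\<Sum>l\<in>{a..b}. abar m (l * pr m i))"
proof -
  have "inj_on (\<lambda>l. l * pr m i) {a..b}" using p_pos by (auto simp: inj_on_def)
  thus ?thesis by (simp add: sum.reindex)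
qed

lemma xseq_k: "xseq m i (kk m) = 1"
proof -
  let ?p = "pr m i" and ?k = "kk m"
  have e1: "(\<Sum>j\<in>{1..?k}. abar m j * xseq m i (?k - j)) = (\<Sum>j\<in>{1..?k}. if ?p dvd j then abar m j else 0)"
  proof (rule sum.cong)
    fix j assume j: "j \<in> {1..?k}"
    have "xseq m i (?k - j) = (if (?k - j) mod ?p = ?k mod ?p then 1 else 0)"
      using j by (simp add: xseq_lt x_init_char)
    also have "((?k - j) mod ?p = ?k mod ?p) \<longleftrightarrow> ?p dvd j"
      using j mod_eq_dvd_iff_nat[of "?k - j" ?k ?p] by auto
    finally show "abar m j * xseq m i (?k - j) = (if ?p dvd j then abar m j else 0)" by simp
  qed simp
  also have "\<dots> = (\<Sum>j\<in>{j\<in>{1..?k}. ?p dvd j}. abar m j)"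
    by (rule sum.inter_filter[symmetric]) simp
  also have "\<dots> = (\<Sum>j\<in>(\<lambda>l. l * ?p) ` {1..2 * rho m}. abar m j)"
  proof (rule sum.mono_neutral_right)
    show "(\<lambda>l. l * ?p) ` {1..2 * rho m} \<subseteq> {j \<in> {1..?k}. ?p dvd j}"
    proof
      fix j assume "j \<in> (\<lambda>l. l * ?p) ` {1..2 * rho m}"
      then obtain l where l: "1 \<le> l" "l \<le> 2 * rho m" "j = l * ?p" by auto
      have "l * ?p \<le> 2 * rho m * ?p" using l by simp
      hence "l * ?p \<le> ?k" using k_big by linarith
      thus "j \<in> {j \<in> {1..?k}. ?p dvd j}" using l p_pos by auto
    qed
    show "\<forall>j\<in>{j \<in> {1..?k}. ?p dvd j} - (\<lambda>l. l * ?p) ` {1..2 * rho m}. abar m j = 0"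
      using supp_mult[OF il] by fastforce
  qed simp
  also have "\<dots> = (\<Sum>l\<in>{1..2 * rho m}. wl m l)"
    unfolding sum_mults by (rule sum.cong) (auto intro: abar_at[OF il])
  also have "\<dots> = 2 * int (rho m)" using P_total[OF r2] .
  finally have "(\<Sum>j\<in>{1..?k}. abar m j * xseq m i (?k - j)) = theta_bar m" unfolding theta_bar_def .
  thus ?thesis unfolding xseq_def
    by (subst thr_seq.simps) (simp add: step1_def xseq_def[symmetric])
qed

end


lemma same_class:
  fixes p p' d l1 l2 :: nat
  assumes "prime p" "prime p'" "p \<noteq> p'" "l2 \<le> l1" "l1 < p" "p dvd (l1*p' - d)" "p dvd (l2*p' - d)" "d < l2*p'"
  shows "l1 = l2"
proof -
  have le: "l2*p' \<le> l1*p'" using assms(4) by simp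
  have "l1*p' - d - (l2*p' - d) = (l1 - l2)*p'" using le assms(8) by (simp add: diff_mult_distrib)
  hence "p dvd (l1-l2)*p'" using dvd_diff_nat[OF assms(6,7)] by simp
  hence "p dvd (l1 - l2) \<or> p dvd p'" using prime_dvd_mult_iff assms(1) by blast
  moreover have "\<not> p dvd p'" using primes_dvd_imp_eq assms(1-3) by blast
  ultimately have d: "p dvd (l1 - l2)" by blast
  have "l1 - l2 < p" using assms by linarith
  hence "l1 - l2 = 0" using d by (metis dvd_imp_le not_less neq0_conv)
  thus ?thesis using assms(4) by simp
qed

context
  fixes m i :: nat
  assumes m0: "m > 0" and r2: "rho m \<ge> 2" and il: "i < rho m"
begin

lemma v_char_low:
  assumes "n + 2 \<le> kk m"
  shows "vseq m i n = (if (n+1) mod pr m i = kk m mod pr m i then 1 else 0)"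
  using assms by (simp add: vseq_lt[OF m0 r2 il] v_init_def xseq_lt[OF m0 r2 il] x_init_char[OF m0 r2 il])

lemma v_km1: "vseq m i (kk m - 1) = 0"
proof -
  have "kk m > 0" using k_gt_p[OF m0 r2 il] by simp
  thus ?thesis by (simp add: vseq_lt[OF m0 r2 il] v_init_def xseq_k[OF m0 r2 il])
qed

lemma S_bound:
  assumes t: "kk m \<le> t" and IH: "\<And>s. kk m \<le> s \<Longrightarrow> s < t \<Longrightarrow> vseq m i s = 0"
  shows "(\<Sum>j\<in>{1..kk m}. abar m j * vseq m i (t - j)) \<le> theta_bar m - 2"
proof -
  let ?p = "pr m i" and ?k = "kk m"
  have pp: "?p > 0" using p_pos[OF m0 r2 il] .
  define d where "d = t + 1 - ?k"
  have d1: "1 \<le> d" using t unfolding d_def by simp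
  define J where "J = {j\<in>{1..?k}. d < j \<and> ?p dvd (j - d)}"
  have finJ: "finite J" unfolding J_def by simp
  have val: "vseq m i (t - j) = (if d < j \<and> ?p dvd (j - d) then 1 else 0)" if j: "j \<in> {1..?k}" for j
  proof -
    consider "j < d" | "j = d" | "d < j" by linarith
    then show ?thesis
    proof cases
      case 1 then show ?thesis using IH[of "t - j"] j unfolding d_def by auto
    next
      case 2 then have "t - j = ?k - 1" unfolding d_def using t by simp
      then show ?thesis using 2 v_km1 by simp
    next
      case 3
      have jk: "j \<le> ?k" using j by simp
      have n2: "(t - j) + 2 \<le> ?k" using 3 t jk unfolding d_def by linarith
      have "((t - j + 1) mod ?p = ?k mod ?p) \<longleftrightarrow> ?p dvd (?k - (t - j + 1))"
        using mod_eq_dvd_iff_nat[of "t - j + 1" ?k ?p] n2 by auto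
      moreover have "?k - (t - j + 1) = j - d" unfolding d_def using 3 t j n2 by auto
      ultimately show ?thesis using v_char_low[OF n2] 3 by simp
    qed
  qed
  have S: "(\<Sum>j\<in>{1..?k}. abar m j * vseq m i (t - j)) = (\<Sum>j\<in>J. abar m j)"
    unfolding J_def by (subst sum.inter_filter) (auto simp: val intro!: sum.cong)
  have "(\<Sum>j\<in>J. abar m j) \<le> 2 * int (rho m) - 2"
  proof (cases "?p dvd d")
    case True
    then obtain q where q: "d = q * ?p" unfolding dvd_def by (auto simp: mult.commute)
    have q1: "1 \<le> q" using d1 q by (cases q) auto
    have "(\<Sum>j\<in>J. abar m j) = (\<Sum>j\<in>(\<lambda>l. l * ?p) ` {q+1..2*rho m}. abar m j)"
    proof (rule sum.mono_neutral_right[OF finJ])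
      show "(\<lambda>l. l * ?p) ` {q+1..2*rho m} \<subseteq> J"
      proof
        fix j assume "j \<in> (\<lambda>l. l * ?p) ` {q+1..2*rho m}"
        then obtain l where l: "q+1 \<le> l" "l \<le> 2 * rho m" "j = l * ?p" by auto
        have "l * ?p \<le> 2 * rho m * ?p" using l by simp
        hence "l * ?p \<le> ?k" using k_big[OF m0 r2 il] by linarith
        moreover have "q * ?p < l * ?p" using l pp by simp
        moreover have "l * ?p - q * ?p = (l - q) * ?p" by (simp add: diff_mult_distrib)
        moreover have "1 \<le> l * ?p" using l q1 pp by simp
        ultimately show "j \<in> J" unfolding J_def using l(3) q by simp
      qed
      show "\<forall>j\<in>J - (\<lambda>l. l * ?p) ` {q+1..2*rho m}. abar m j = 0"
      proof (rule ballI, rule ccontr)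
        fix j assume j: "j \<in> J - (\<lambda>l. l * ?p) ` {q+1..2*rho m}" and nz: "abar m j \<noteq> 0"
        have dj: "d < j" "?p dvd (j - d)" using j unfolding J_def by auto
        have "?p dvd (j - d) + d" using dj(2) True by (rule dvd_add)
        hence "?p dvd j" using dj(1) by simp
        then obtain l where l: "1 \<le> l" "l \<le> 2 * rho m" "j = l * ?p" using supp_mult[OF il nz] by blast
        have "q * ?p < l * ?p" using dj(1) l(3) q by simp
        hence "q < l" by simp
        hence "l \<in> {q+1..2*rho m}" using l by simp
        hence "j \<in> (\<lambda>l. l * ?p) ` {q+1..2*rho m}" using l(3) by blast
        thus False using j by blast
      qed
    qed
    also have "\<dots> = (\<Sum>l\<in>{q+1..2 * rho m}. wl m l)"
      unfolding sum_mults[OF m0 r2 il] by (rule sum.cong) (auto intro: abar_at[OF il])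
    also have "\<dots> \<le> 2 * int (rho m) - 2" using tail_bound[OF r2 q1] .
    finally show ?thesis .
  next
    case False
    define J' where "J' = {j\<in>J. abar m j \<noteq> 0}"
    have finJ': "finite J'" using finJ unfolding J'_def by simp
    have "(\<Sum>j\<in>J. abar m j) = (\<Sum>j\<in>J'. abar m j)"
      by (rule sum.mono_neutral_right[OF finJ]) (auto simp: J'_def)
    also have "\<dots> \<le> (\<Sum>j\<in>J'. 2)" by (rule sum_mono) (rule abar_le)
    also have "\<dots> = 2 * int (card J')" by simp
    also have "card J' \<le> rho m - 1"
    proof -
      define A where "A i' = {j\<in>J'. \<exists>l. 1 \<le> l \<and> l \<le> 2 * rho m \<and> j = l * pr m i'}" for i'
      let ?I = "{..<rho m} - {i}"
      have cover: "J' \<subseteq> (\<Union>i'\<in>?I. A i')"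
      proof
        fix j assume j: "j \<in> J'"
        then obtain i' l where h: "i' < rho m" "1 \<le> l" "l \<le> 2 * rho m" "j = l * pr m i'"
          using abar_nz unfolding J'_def by blast
        have dj: "d < j" "?p dvd (j - d)" using j unfolding J'_def J_def by auto
        have "i' \<noteq> i"
        proof
          assume "i' = i"
          hence "?p dvd j" using h(4) by simp
          hence "?p dvd j - (j - d)" using dj(2) by (rule dvd_diff_nat)
          moreover have "j - (j - d) = d" using dj by simp
          ultimately show False using False by simp
        qed
        thus "j \<in> (\<Union>i'\<in>?I. A i')" using h j unfolding A_def by blast
      qed
      have cardA: "card (A i') \<le> 1" if i': "i' \<in> ?I" for i'
      proof -
        have fA: "finite (A i')" using finJ' unfolding A_def by simp
        have ne: "pr m i \<noteq> pr m i'" using i' pr_inj[OF il, of i'] by auto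
        have pri: "prime (pr m i)" "prime (pr m i')" using pr_props(1) il i' by auto
        have key: "l1 = l2" if "l1 * pr m i' \<in> J" "l2 * pr m i' \<in> J" "l2 \<le> l1" "l1 \<le> 2 * rho m" for l1 l2
        proof (rule same_class[OF pri ne that(3)])
          show "l1 < pr m i" using that(4) two_rho_lt[OF il] by linarith
          show "pr m i dvd l1 * pr m i' - d" "pr m i dvd l2 * pr m i' - d" "d < l2 * pr m i'"
            using that(1,2) unfolding J_def by auto
        qed
        have "\<forall>a\<in>A i'. \<forall>b\<in>A i'. a = b"
        proof (intro ballI)
          fix a b assume a: "a \<in> A i'" and b: "b \<in> A i'"
          obtain l1 where l1: "l1 \<le> 2 * rho m" "a = l1 * pr m i'" "a \<in> J" using a unfolding A_def J'_def by auto
          obtain l2 where l2: "l2 \<le> 2 * rho m" "b = l2 * pr m i'" "b \<in> J" using b unfolding A_def J'_def by auto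
          show "a = b"
          proof (cases "l2 \<le> l1")
            case True then show ?thesis using key[of l1 l2] l1 l2 by simp
          next
            case False then show ?thesis using key[of l2 l1] l1 l2 by simp
          qed
        qed
        thus ?thesis using card_le_Suc0_iff_eq[OF fA] by simp
      qed
      have "card J' \<le> card (\<Union>i'\<in>?I. A i')"
        by (rule card_mono[OF _ cover]) (auto simp: A_def finJ')
      also have "\<dots> \<le> (\<Sum>i'\<in>?I. card (A i'))" by (rule card_UN_le) simp
      also have "\<dots> \<le> (\<Sum>i'\<in>?I. 1)" by (rule sum_mono) (rule cardA)
      also have "\<dots> = rho m - 1" using il by simp
      finally show ?thesis .
    qed
    hence "2 * int (card J') \<le> 2 * int (rho m) - 2" using r2 by linarith
    finally show ?thesis .
  qed
  thus ?thesis using S unfolding theta_bar_def by simp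
qed

lemma v_zero: "kk m \<le> t \<Longrightarrow> vseq m i t = 0"
proof (induction t rule: less_induct)
  case (less t)
  have S: "(\<Sum>j\<in>{1..kk m}. abar m j * vseq m i (t - j)) \<le> theta_bar m - 2"
    by (rule S_bound) (use less in auto)
  show ?case using less.prems S unfolding vseq_def
    by (subst thr_seq.simps) (simp add: step1_def vseq_def[symmetric])
qed

lemma v_last: "vseq m i (kk m - 1 - pr m i) = 1"
proof -
  have k: "pr m i < kk m" "pr m i > 0" using k_gt_p[OF m0 r2 il] p_pos[OF m0 r2 il] by auto
  have n2: "kk m - 1 - pr m i + 2 \<le> kk m" using k by linarith
  have e: "kk m - 1 - pr m i + 1 = kk m - pr m i" using k by linarith
  have "(kk m - pr m i) mod pr m i = kk m mod pr m i"
    using mod_eq_dvd_iff_nat[of "kk m - pr m i" "kk m" "pr m i"] k by simp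
  thus ?thesis using v_char_low[OF n2] e by simp
qed

lemma v_tail: "kk m - pr m i \<le> n \<Longrightarrow> vseq m i n = 0"
proof -
  assume n: "kk m - pr m i \<le> n"
  have k: "pr m i < kk m" "pr m i > 0" using k_gt_p[OF m0 r2 il] p_pos[OF m0 r2 il] by auto
  consider "kk m \<le> n" | "n = kk m - 1" | "n + 2 \<le> kk m" by linarith
  then show ?thesis
  proof cases
    case 1 then show ?thesis by (rule v_zero)
  next
    case 2 then show ?thesis using v_km1 by simp
  next
    case 3
    have "\<not> pr m i dvd kk m - (n + 1)"
    proof
      assume "pr m i dvd kk m - (n + 1)"
      moreover have "0 < kk m - (n+1)" "kk m - (n+1) < pr m i" using 3 n k by linarith+
      ultimately show False using dvd_imp_le by (metis not_less)
    qed
    hence "(n+1) mod pr m i \<noteq> kk m mod pr m i"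
      using mod_eq_dvd_iff_nat[of "n+1" "kk m" "pr m i"] 3 by auto
    thus ?thesis using v_char_low[OF 3] by simp
  qed
qed

end


theorem lemma10:
  fixes m i :: nat
  assumes "m > 0" and "rho m \<ge> 2" and "i < rho m"
  shows "(\<forall>t\<ge>kk m. vseq m i t = 0)
       \<and> (\<forall>t\<ge>kk m. (\<Sum>j\<in>{1..kk m}. abar m j * vseq m i (t - j)) \<le> theta_bar m - 2)
       \<and> eventually_periodic (vseq m i)
       \<and> transient_length (vseq m i) = kk m - pr m i
       \<and> cycle_length (vseq m i) = 1"
proof -
  note A = assms
  let ?v = "vseq m i" and ?T = "kk m - pr m i"
  have a: "\<forall>t\<ge>kk m. ?v t = 0" using v_zero[OF A] by blast
  have b: "\<forall>t\<ge>kk m. (\<Sum>j\<in>{1..kk m}. abar m j * ?v (t - j)) \<le> theta_bar m - 2"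
    using S_bound[OF A] v_zero[OF A] by blast
  have per: "periodic_from ?v ?T 1"
    unfolding periodic_from_def using v_tail[OF A] by simp
  have notper: "\<not> periodic_from ?v T P" if T: "T < ?T" for T P
  proof
    assume h: "periodic_from ?v T P"
    hence P: "P \<ge> 1" and rec: "\<And>n. n \<ge> T \<Longrightarrow> ?v (n + P) = ?v n"
      unfolding periodic_from_def by auto
    let ?n0 = "kk m - 1 - pr m i"
    have n0: "T \<le> ?n0" using T by linarith
    have all: "?v (?n0 + a * P) = 1" for a
    proof (induction a)
      case 0 then show ?case using v_last[OF A] by simp
    next
      case (Suc a)
      have "?v (?n0 + Suc a * P) = ?v ((?n0 + a * P) + P)" by (simp add: ac_simps)
      also have "\<dots> = ?v (?n0 + a * P)" using rec n0 by simp
      finally show ?case using Suc by simp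
    qed
    have "kk m * 1 \<le> kk m * P" using P by (rule mult_left_mono) simp
    hence "kk m \<le> ?n0 + kk m * P" by linarith
    hence "?v (?n0 + kk m * P) = 0" using v_zero[OF A] by blast
    thus False using all[of "kk m"] by simp
  qed
  have tl: "transient_length ?v = ?T"
    unfolding transient_length_def
  proof (rule Least_equality)
    show "\<exists>P. periodic_from ?v ?T P" using per by blast
    fix y assume "\<exists>P. periodic_from ?v y P"
    thus "?T \<le> y" using notper by (meson not_le)
  qed
  have cl: "cycle_length ?v = 1"
    unfolding cycle_length_def tl
  proof (rule Least_equality)
    show "periodic_from ?v ?T 1" by (rule per)
    fix y assume "periodic_from ?v ?T y"
    thus "1 \<le> y" unfolding periodic_from_def by simp
  qed
  have ep: "eventually_periodic ?v" unfolding eventually_periodic_def using per by blast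
  show ?thesis using a b ep tl cl by blast
qed

end
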